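(* Under the standing assumptions below, for each $i$ the category $D(\varepsilon_{a_i})$ is full in $R$: every arrow of $Q$ (and more generally every morphism of $R$) between two vertices of $D(\varepsilon_{a_i})$ belongs to $D(\varepsilon_{a_i})$.
   Context: Standing assumptions: $R=kQ/I$ is a string algebra (I generated by paths; each vertex has at most two incoming and two outgoing arrows; for each arrow $\alpha:x\to y$ at most one arrow $\beta$ from $y$ with $\alpha\beta\notin I$ and at most one arrow $\gamma$ into $x$ with $\gamma\alpha\notin I$; paths composed left to right) with no DOZE, $Q$ contains a band, and every band has either only exiting arrows or only entering arrows, and $Q$ is not just a single band without entering or exiting arrows. A walk is a sequence of arrows and inverse arrows, reduced if no subwalk $\alpha\alpha^{-1}$ or $\alpha^{-1}\alpha$; a string is a reduced walk with no zero-relation; a band is a cyclic string, not a power of another, all of whose powers are strings. Arrows entering/exiting a band are arrows not on the band with target/source on the band. A double-zero is a reduced walk $\rho_1\nu\rho_2$ with $\rho_1,\rho_2$ paths in $I$ traversed along their arrows; a DOZE is a double-zero $\rho_1\omega_1\omega_2\omega_3\rho_2$ with $\omega_2$ a band. Let $\Theta_1,\dots,\Theta_n$ be the bands (up to cyclic permutation) having only exiting arrows; on each $\Theta_i$ choose a vertex $a_i$ such that all arrows starting at $a_i$ belong to $\Theta_i$. For a string $\omega$, $W(\omega)$ is the set of strings of the form $\omega_1\omega\omega_2$, and $D(\omega)$ is the subcategory whose objects are the vertices through which some string of $W(\omega)$ passes and whose morphisms are generated by the arrows through which some string of $W(\omega)$ passes. $\varepsilon_{a}$ denotes the trivial path at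 $a$. *)

theory Defs
  imports Main "HOL-Library.Sublist"
begin

text \<open>A bound quiver (Q, I) with I generated by a set of paths (monomial relations).
Paths are lists of arrows composed left to right.\<close>

record ('v, 'a) bquiver =
  qv   :: "'v set"
  qa   :: "'a set"
  qs   :: "'a \<Rightarrow> 'v"
  qt   :: "'a \<Rightarrow> 'v"
  qrel :: "'a list set"

fun path_from :: "('v,'a) bquiver \<Rightarrow> 'v \<Rightarrow> 'a list \<Rightarrow> bool" where
  "path_from Q x [] = (x \<in> qv Q)"
| "path_from Q x (\<alpha> # ps) = (\<alpha> \<in> qa Q \<and> qs Q \<alpha> = x \<and> path_from Q (qt Q \<alpha>) ps)"

fun path_end :: "('v,'a) bquiver \<Rightarrow> 'v \<Rightarrow> 'a list \<Rightarrow> 'v" where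
  "path_end Q x [] = x"
| "path_end Q x (\<alpha> # ps) = path_end Q (qt Q \<alpha>) ps"

text \<open>Since I is generated by paths, a path lies in I iff it contains a generator as a subpath.\<close>
definition in_I :: "('v,'a) bquiver \<Rightarrow> 'a list \<Rightarrow> bool" where
  "in_I Q p \<longleftrightarrow> (\<exists>r\<in>qrel Q. sublist r p)"

text \<open>Letters: (alpha, True) is the arrow alpha, (alpha, False) its formal inverse.\<close>
type_synonym 'a letter = "'a \<times> bool"

fun lsrc :: "('v,'a) bquiver \<Rightarrow> 'a letter \<Rightarrow> 'v" where
  "lsrc Q (\<alpha>, d) = (if d then qs Q \<alpha> else qt Q \<alpha>)"

fun ltgt :: "('v,'a) bquiver \<Rightarrow> 'a letter \<Rightarrow> 'v" where
  "ltgt Q (\<alpha>, d) = (if d then qt Q \<alpha> else qs Q \<alpha>)"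

text \<open>A walk is a start vertex together with a list of letters (empty list = trivial walk).\<close>
type_synonym ('v, 'a) walk = "'v \<times> 'a letter list"

fun walk_from :: "('v,'a) bquiver \<Rightarrow> 'v \<Rightarrow> 'a letter list \<Rightarrow> bool" where
  "walk_from Q x [] = (x \<in> qv Q)"
| "walk_from Q x (l # ls) = (fst l \<in> qa Q \<and> lsrc Q l = x \<and> walk_from Q (ltgt Q l) ls)"

fun wend_from :: "('v,'a) bquiver \<Rightarrow> 'v \<Rightarrow> 'a letter list \<Rightarrow> 'v" where
  "wend_from Q x [] = x"
| "wend_from Q x (l # ls) = wend_from Q (ltgt Q l) ls"

definition is_walk :: "('v,'a) bquiver \<Rightarrow> ('v,'a) walk \<Rightarrow> bool" where
  "is_walk Q w \<longleftrightarrow> walk_from Q (fst w) (snd w)"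

definition wend :: "('v,'a) bquiver \<Rightarrow> ('v,'a) walk \<Rightarrow> 'v" where
  "wend Q w = wend_from Q (fst w) (snd w)"

definition reduced :: "'a letter list \<Rightarrow> bool" where
  "reduced ls \<longleftrightarrow> (\<forall>i. Suc i < length ls \<longrightarrow>
      \<not> (fst (ls ! i) = fst (ls ! Suc i) \<and> snd (ls ! i) \<noteq> snd (ls ! Suc i)))"

definition no_zero_rel :: "('v,'a) bquiver \<Rightarrow> 'a letter list \<Rightarrow> bool" where
  "no_zero_rel Q ls \<longleftrightarrow> (\<forall>u. sublist u ls \<longrightarrow>
      \<not> ((\<forall>l\<in>set u. snd l) \<and> in_I Q (map fst u)) \<and>
      \<not> ((\<forall>l\<in>set u. \<not> snd l) \<and> in_I Q (rev (map fst u))))"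

definition is_string :: "('v,'a) bquiver \<Rightarrow> ('v,'a) walk \<Rightarrow> bool" where
  "is_string Q w \<longleftrightarrow> is_walk Q w \<and> reduced (snd w) \<and> no_zero_rel Q (snd w)"

definition wpow :: "('v,'a) walk \<Rightarrow> nat \<Rightarrow> ('v,'a) walk" where
  "wpow w n = (fst w, concat (replicate n (snd w)))"

definition is_band :: "('v,'a) bquiver \<Rightarrow> ('v,'a) walk \<Rightarrow> bool" where
  "is_band Q w \<longleftrightarrow> snd w \<noteq> [] \<and> is_string Q w \<and> wend Q w = fst w \<and>
     (\<forall>n\<ge>1. is_string Q (wpow w n)) \<and>
     \<not> (\<exists>u k. k \<ge> 2 \<and> snd w = concat (replicate k u))"

definition wverts :: "('v,'a) bquiver \<Rightarrow> ('v,'a) walk \<Rightarrow> 'v set" where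
  "wverts Q w = insert (fst w) (ltgt Q ` set (snd w))"

definition warrs :: "('v,'a) walk \<Rightarrow> 'a set" where
  "warrs w = fst ` set (snd w)"

definition exiting :: "('v,'a) bquiver \<Rightarrow> ('v,'a) walk \<Rightarrow> 'a \<Rightarrow> bool" where
  "exiting Q B \<alpha> \<longleftrightarrow> \<alpha> \<in> qa Q \<and> \<alpha> \<notin> warrs B \<and> qs Q \<alpha> \<in> wverts Q B"

definition entering :: "('v,'a) bquiver \<Rightarrow> ('v,'a) walk \<Rightarrow> 'a \<Rightarrow> bool" where
  "entering Q B \<alpha> \<longleftrightarrow> \<alpha> \<in> qa Q \<and> \<alpha> \<notin> warrs B \<and> qt Q \<alpha> \<in> wverts Q B"

definition dir :: "'a list \<Rightarrow> 'a letter list" where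
  "dir p = map (\<lambda>\<alpha>. (\<alpha>, True)) p"

text \<open>DOZE: a reduced walk rho1 omega1 omega2 omega3 rho2 with rho1, rho2 paths in I
traversed along their arrows and omega2 a band.\<close>
definition is_DOZE :: "('v,'a) bquiver \<Rightarrow> ('v,'a) walk \<Rightarrow> bool" where
  "is_DOZE Q w \<longleftrightarrow> is_walk Q w \<and> reduced (snd w) \<and>
     (\<exists>r1 o1 o2 o3 r2. snd w = dir r1 @ o1 @ o2 @ o3 @ dir r2 \<and> in_I Q r1 \<and> in_I Q r2 \<and>
        is_band Q (wend_from Q (fst w) (dir r1 @ o1), o2))"

definition string_algebra :: "('v,'a) bquiver \<Rightarrow> bool" where
  "string_algebra Q \<longleftrightarrow>
     finite (qv Q) \<and> finite (qa Q) \<and>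
     (\<forall>\<alpha>\<in>qa Q. qs Q \<alpha> \<in> qv Q \<and> qt Q \<alpha> \<in> qv Q) \<and>
     (\<forall>r\<in>qrel Q. length r \<ge> 2 \<and> path_from Q (qs Q (hd r)) r) \<and>
     (\<forall>x\<in>qv Q. card {\<alpha>\<in>qa Q. qs Q \<alpha> = x} \<le> 2 \<and> card {\<alpha>\<in>qa Q. qt Q \<alpha> = x} \<le> 2) \<and>
     (\<forall>\<alpha>\<in>qa Q. (\<forall>\<beta>\<in>qa Q. \<forall>\<beta>'\<in>qa Q. qs Q \<beta> = qt Q \<alpha> \<and> qs Q \<beta>' = qt Q \<alpha> \<and>
                   \<not> in_I Q [\<alpha>, \<beta>] \<and> \<not> in_I Q [\<alpha>, \<beta>'] \<longrightarrow> \<beta> = \<beta>') \<and>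
                (\<forall>\<gamma>\<in>qa Q. \<forall>\<gamma>'\<in>qa Q. qt Q \<gamma> = qs Q \<alpha> \<and> qt Q \<gamma>' = qs Q \<alpha> \<and>
                   \<not> in_I Q [\<gamma>, \<alpha>] \<and> \<not> in_I Q [\<gamma>', \<alpha>] \<longrightarrow> \<gamma> = \<gamma>'))"

definition Wstr :: "('v,'a) bquiver \<Rightarrow> ('v,'a) walk \<Rightarrow> ('v,'a) walk set" where
  "Wstr Q w = {s. is_string Q s \<and> (\<exists>u v. is_walk Q u \<and> is_walk Q v \<and>
       wend Q u = fst w \<and> wend Q w = fst v \<and> s = (fst u, snd u @ snd w @ snd v))}"

definition D_obj :: "('v,'a) bquiver \<Rightarrow> ('v,'a) walk \<Rightarrow> 'v set" where
  "D_obj Q w = (\<Union>s\<in>Wstr Q w. wverts Q s)"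

definition D_arr :: "('v,'a) bquiver \<Rightarrow> ('v,'a) walk \<Rightarrow> 'a set" where
  "D_arr Q w = (\<Union>s\<in>Wstr Q w. warrs s)"

end

theory Submission
  imports Defs
begin


definition linv :: "'a letter \<Rightarrow> 'a letter" where
  "linv l = (fst l, \<not> snd l)"

definition revw :: "'a letter list \<Rightarrow> 'a letter list" where
  "revw ls = rev (map linv ls)"

definition compat :: "'a letter \<Rightarrow> 'a letter \<Rightarrow> bool" where
  "compat l1 l2 \<longleftrightarrow> \<not> (fst l1 = fst l2 \<and> snd l1 \<noteq> snd l2)"

lemma linv_linv[simp]: "linv (linv l) = l"
  by (simp add: linv_def)

lemma fst_linv[simp]: "fst (linv l) = fst l" and snd_linv[simp]: "snd (linv l) = (\<not> snd l)"
  by (simp_all add: linv_def)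

lemma compat_iff: "compat l1 l2 \<longleftrightarrow> l2 \<noteq> linv l1"
  by (cases l1; cases l2) (auto simp: compat_def linv_def)

lemma compat_sym: "compat l1 l2 \<longleftrightarrow> compat l2 l1"
  by (auto simp: compat_def)

lemma compat_linv: "compat (linv l1) (linv l2) \<longleftrightarrow> compat l2 l1"
  by (auto simp: compat_def)

lemma revw_Nil[simp]: "revw [] = []"
  and revw_Cons[simp]: "revw (l # ls) = revw ls @ [linv l]"
  and revw_append[simp]: "revw (xs @ ys) = revw ys @ revw xs"
  and revw_revw[simp]: "revw (revw xs) = xs"
  and length_revw[simp]: "length (revw xs) = length xs"
  and revw_eq_Nil[simp]: "revw xs = [] \<longleftrightarrow> xs = []"
  by (auto simp: revw_def rev_map comp_def)

lemma set_revw: "set (revw xs) = linv ` set xs"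
  by (simp add: revw_def)

lemma fst_set_revw[simp]: "fst ` set (revw xs) = fst ` set xs"
  by (force simp: set_revw image_iff)

lemma hd_revw: "xs \<noteq> [] \<Longrightarrow> hd (revw xs) = linv (last xs)"
  by (simp add: revw_def hd_rev last_map)

lemma last_revw: "xs \<noteq> [] \<Longrightarrow> last (revw xs) = linv (hd xs)"
  by (simp add: revw_def last_rev hd_map)

lemma reduced_Nil[simp]: "reduced []"
  by (simp add: reduced_def)

lemma reduced_Cons: "reduced (x # ls) \<longleftrightarrow> (ls \<noteq> [] \<longrightarrow> compat x (hd ls)) \<and> reduced ls"
proof
  assume r: "reduced (x # ls)"
  show "(ls \<noteq> [] \<longrightarrow> compat x (hd ls)) \<and> reduced ls"
  proof
    show "ls \<noteq> [] \<longrightarrow> compat x (hd ls)"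
      using r[unfolded reduced_def, rule_format, of 0] by (cases ls) (auto simp: compat_def)
    show "reduced ls" unfolding reduced_def
    proof (intro allI impI)
      fix i assume "Suc i < length ls"
      then show "\<not> (fst (ls ! i) = fst (ls ! Suc i) \<and> snd (ls ! i) \<noteq> snd (ls ! Suc i))"
        using r[unfolded reduced_def, rule_format, of "Suc i"] by simp
    qed
  qed
next
  assume h: "(ls \<noteq> [] \<longrightarrow> compat x (hd ls)) \<and> reduced ls"
  show "reduced (x # ls)" unfolding reduced_def
  proof (intro allI impI)
    fix i assume i: "Suc i < length (x # ls)"
    show "\<not> (fst ((x # ls) ! i) = fst ((x # ls) ! Suc i) \<and> snd ((x # ls) ! i) \<noteq> snd ((x # ls) ! Suc i))"
    proof (cases i)
      case 0
      then show ?thesis using h i by (cases ls) (auto simp: compat_def)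
    next
      case (Suc j)
      then show ?thesis using h i unfolding reduced_def by auto
    qed
  qed
qed

lemma reduced_append:
  "reduced (xs @ ys) \<longleftrightarrow> reduced xs \<and> reduced ys \<and> (xs \<noteq> [] \<longrightarrow> ys \<noteq> [] \<longrightarrow> compat (last xs) (hd ys))"
  by (induction xs) (auto simp: reduced_Cons)

lemma reduced_sublist: "sublist xs ys \<Longrightarrow> reduced ys \<Longrightarrow> reduced xs"
  by (auto simp: sublist_def reduced_append)

lemma reduced_revw[simp]: "reduced (revw xs) \<longleftrightarrow> reduced xs"
proof (induction xs)
  case (Cons x xs)
  have "reduced (revw (x # xs)) = (reduced (revw xs) \<and> (xs \<noteq> [] \<longrightarrow> compat (linv (hd xs)) (linv x)))"
    by (simp add: reduced_append last_revw reduced_Cons)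
  also have "\<dots> = reduced (x # xs)"
    by (auto simp: Cons.IH reduced_Cons compat_linv)
  finally show ?case .
qed simp

lemma reduced_dir[simp]: "reduced (dir p)"
proof (induction p)
  case (Cons x p)
  then show ?case by (cases p) (auto simp: dir_def reduced_Cons compat_def)
qed (simp add: dir_def)

lemma nzr_sublist: "sublist xs ys \<Longrightarrow> no_zero_rel Q ys \<Longrightarrow> no_zero_rel Q xs"
  unfolding no_zero_rel_def by (meson sublist_order.order.trans)

lemma nzr_revw[simp]: "no_zero_rel Q (revw xs) \<longleftrightarrow> no_zero_rel Q xs"
proof -
  have *: "no_zero_rel Q (revw xs)" if "no_zero_rel Q xs" for xs
    unfolding no_zero_rel_def
  proof (intro allI impI)
    fix u assume "sublist u (revw xs)"
    then have "sublist (rev u) (map linv xs)" by (simp add: revw_def sublist_rev_right)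
    then have "sublist (map linv (rev u)) (map linv (map linv xs))" by (rule map_mono_sublist)
    then have s: "sublist (revw u) xs" by (simp add: revw_def rev_map comp_def)
    have "\<not> ((\<forall>l\<in>set (revw u). snd l) \<and> in_I Q (map fst (revw u)))"
         "\<not> ((\<forall>l\<in>set (revw u). \<not> snd l) \<and> in_I Q (rev (map fst (revw u))))"
      using that s unfolding no_zero_rel_def by blast+
    then show "\<not> ((\<forall>l\<in>set u. snd l) \<and> in_I Q (map fst u)) \<and>
          \<not> ((\<forall>l\<in>set u. \<not> snd l) \<and> in_I Q (rev (map fst u)))"
      by (auto simp: revw_def rev_map comp_def)
  qed
  show ?thesis using *[of xs] *[of "revw xs"] by auto
qed

lemma map_fst_dir[simp]: "map fst (dir p) = p"
  by (simp add: dir_def comp_def)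

lemma set_dir_snd: "l \<in> set (dir p) \<Longrightarrow> snd l"
  by (auto simp: dir_def)

lemma in_I_Nil: "(\<forall>r\<in>qrel Q. length r \<ge> 2) \<Longrightarrow> \<not> in_I Q []"
  by (auto simp: in_I_def)

lemma nzr_dir_iff:
  assumes "\<forall>r\<in>qrel Q. length r \<ge> 2"
  shows "no_zero_rel Q (dir p) \<longleftrightarrow> \<not> in_I Q p"
proof
  assume "no_zero_rel Q (dir p)"
  then have "\<not> ((\<forall>l\<in>set (dir p). snd l) \<and> in_I Q (map fst (dir p)))"
    unfolding no_zero_rel_def by blast
  then show "\<not> in_I Q p" using set_dir_snd by auto
next
  assume n: "\<not> in_I Q p"
  show "no_zero_rel Q (dir p)" unfolding no_zero_rel_def
  proof (intro allI impI conjI)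
    fix u assume s: "sublist u (dir p)"
    then have "sublist (map fst u) p"
      using map_mono_sublist[OF s, of fst] by simp
    then show "\<not> ((\<forall>l\<in>set u. snd l) \<and> in_I Q (map fst u))"
      using n unfolding in_I_def by (meson sublist_order.order.trans)
    show "\<not> ((\<forall>l\<in>set u. \<not> snd l) \<and> in_I Q (rev (map fst u)))"
    proof
      assume a: "(\<forall>l\<in>set u. \<not> snd l) \<and> in_I Q (rev (map fst u))"
      have "set u \<subseteq> set (dir p)" using s by (rule set_mono_sublist)
      then have "\<forall>l\<in>set u. snd l" using set_dir_snd by blast
      with a have "u = []" by (cases u) auto
      with a in_I_Nil[OF assms] show False by simp
    qed
  qed
qed

lemma suffix_short:
  assumes "suffix u (xs @ ys)" "length u \<le> length ys" shows "suffix u ys"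
proof -
  from assms(1) have "suffix u ys \<or> (\<exists>xs'. u = xs' @ ys \<and> suffix xs' xs)"
    by (simp add: suffix_append)
  then show ?thesis
  proof
    assume "\<exists>xs'. u = xs' @ ys \<and> suffix xs' xs"
    then obtain xs' where "u = xs' @ ys" by blast
    with assms(2) have "u = ys" by simp
    then show ?thesis by simp
  qed
qed

lemma nzr_snoc:
  assumes "no_zero_rel Q xs" "no_zero_rel Q ys" "xs @ [l] = zs @ c # ys" "snd c \<noteq> snd l"
  shows "no_zero_rel Q (xs @ [l])"
  unfolding no_zero_rel_def
proof (intro allI impI)
  fix u assume "sublist u (xs @ [l])"
  then have "suffix u (xs @ [l]) \<or> sublist u xs" by (simp add: sublist_snoc)
  then show "\<not> ((\<forall>l\<in>set u. snd l) \<and> in_I Q (map fst u)) \<and>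
          \<not> ((\<forall>l\<in>set u. \<not> snd l) \<and> in_I Q (rev (map fst u)))"
  proof
    assume "sublist u xs" then show ?thesis using assms(1) unfolding no_zero_rel_def by blast
  next
    assume su: "suffix u (xs @ [l])"
    have su2: "suffix u ((zs @ [c]) @ ys)" using su assms(3) by simp
    show ?thesis
    proof (cases "length u \<le> length ys")
      case True
      then have "suffix u ys" using su2 suffix_short by blast
      then show ?thesis using assms(2) unfolding no_zero_rel_def by blast
    next
      case False
      have "suffix u ys \<or> (\<exists>xs'. u = xs' @ ys \<and> suffix xs' (zs @ [c]))"
        using su2 suffix_append[of u "zs @ [c]" ys] by blast
      with False obtain xs' where xs': "u = xs' @ ys" "suffix xs' (zs @ [c])"
        using suffix_length_le by fastforce
      with False have "xs' \<noteq> []" by auto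
      with xs' have "last xs' = c" by (auto simp: suffix_def) (metis last_appendR last_snoc)
      with \<open>xs' \<noteq> []\<close> xs' have "c \<in> set u" by auto
      moreover have "l \<in> set u"
      proof -
        from False have "u \<noteq> []" by auto
        with su obtain v where "xs @ [l] = v @ u" by (auto simp: suffix_def)
        then have "last u = l" using \<open>u \<noteq> []\<close> by (metis last_appendR last_snoc)
        with \<open>u \<noteq> []\<close> show ?thesis by auto
      qed
      ultimately show ?thesis using assms(4) by auto
    qed
  qed
qed




definition wfq :: "('v,'a) bquiver \<Rightarrow> bool" where
  "wfq Q \<longleftrightarrow> (\<forall>\<alpha>\<in>qa Q. qs Q \<alpha> \<in> qv Q \<and> qt Q \<alpha> \<in> qv Q)"

lemma lsrc_linv[simp]: "lsrc Q (linv l) = ltgt Q l" and ltgt_linv[simp]: "ltgt Q (linv l) = lsrc Q l"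
  by (cases l; simp add: linv_def)+

lemma lsrc_ltgt_qv: "wfq Q \<Longrightarrow> fst l \<in> qa Q \<Longrightarrow> lsrc Q l \<in> qv Q \<and> ltgt Q l \<in> qv Q"
  by (cases l) (auto simp: wfq_def)

lemma walk_from_qv: "wfq Q \<Longrightarrow> walk_from Q x ls \<Longrightarrow> x \<in> qv Q"
  by (cases ls) (auto dest: lsrc_ltgt_qv)

lemma wend_from_append[simp]: "wend_from Q x (xs @ ys) = wend_from Q (wend_from Q x xs) ys"
  by (induction xs arbitrary: x) auto

lemma walk_from_append:
  "wfq Q \<Longrightarrow> walk_from Q x (xs @ ys) \<longleftrightarrow> walk_from Q x xs \<and> walk_from Q (wend_from Q x xs) ys"
  by (induction xs arbitrary: x) (auto dest: walk_from_qv)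

lemma walk_from_snoc: "wfq Q \<Longrightarrow> walk_from Q x (xs @ [l]) \<longleftrightarrow> walk_from Q x xs \<and> fst l \<in> qa Q \<and> lsrc Q l = wend_from Q x xs"
  by (auto simp: walk_from_append dest: lsrc_ltgt_qv)

lemma wend_from_snoc[simp]: "wend_from Q x (xs @ [l]) = ltgt Q l"
  by simp

lemma walk_revw:
  assumes "wfq Q" "walk_from Q x ls"
  shows "walk_from Q (wend_from Q x ls) (revw ls) \<and> wend_from Q (wend_from Q x ls) (revw ls) = x"
  using assms(2)
proof (induction ls arbitrary: x)
  case Nil then show ?case by simp
next
  case (Cons l ls)
  then have l: "fst l \<in> qa Q" "lsrc Q l = x" and w: "walk_from Q (ltgt Q l) ls" by auto
  from Cons.IH[OF w] show ?case using l assms(1)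
    by (auto simp: walk_from_append dest: lsrc_ltgt_qv)
qed

lemma walk_dir: "path_from Q x p \<longleftrightarrow> walk_from Q x (dir p)"
  by (induction p arbitrary: x) (auto simp: dir_def)

lemma wend_dir: "path_end Q x p = wend_from Q x (dir p)"
  by (induction p arbitrary: x) (auto simp: dir_def)

lemma dir_append[simp]: "dir (xs @ ys) = dir xs @ dir ys" and dir_Nil[simp]: "dir [] = []"
  and dir_Cons: "dir (x # xs) = (x, True) # dir xs"
  by (simp_all add: dir_def)

lemma dir_eq_Nil[simp]: "dir p = [] \<longleftrightarrow> p = []"
  by (simp add: dir_def)

lemma hd_dir: "p \<noteq> [] \<Longrightarrow> hd (dir p) = (hd p, True)"
  by (cases p) (auto simp: dir_def)

lemma last_dir: "p \<noteq> [] \<Longrightarrow> last (dir p) = (last p, True)"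
  by (simp add: dir_def last_map)

lemma walk_split_vertex:
  assumes "v \<in> insert x (ltgt Q ` set ls)"
  shows "\<exists>l1 l2. ls = l1 @ l2 \<and> wend_from Q x l1 = v"
  using assms
proof (induction ls arbitrary: x)
  case Nil then show ?case by auto
next
  case (Cons l ls x)
  show ?case
  proof (cases "v = x")
    case True then show ?thesis by (intro exI[of _ "[]"] exI[of _ "l # ls"]) simp
  next
    case False
    have "v \<in> insert (ltgt Q l) (ltgt Q ` set ls)"
    proof -
      have "v \<in> insert x (ltgt Q ` set (l # ls))" by (rule Cons.prems)
      with False show ?thesis by simp
    qed
    from Cons.IH[OF this] obtain l1 l2 where "ls = l1 @ l2" "wend_from Q (ltgt Q l) l1 = v" by blast
    then show ?thesis by (intro exI[of _ "l # l1"] exI[of _ l2]) auto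
  qed
qed

definition Str :: "('v,'a) bquiver \<Rightarrow> 'v \<Rightarrow> 'a letter list \<Rightarrow> bool" where
  "Str Q x ls \<longleftrightarrow> walk_from Q x ls \<and> reduced ls \<and> no_zero_rel Q ls"

lemma is_string_Str: "is_string Q w \<longleftrightarrow> Str Q (fst w) (snd w)"
  by (simp add: is_string_def Str_def is_walk_def)

lemma Str_prefix: "wfq Q \<Longrightarrow> Str Q x (xs @ ys) \<Longrightarrow> Str Q x xs"
  by (auto simp: Str_def walk_from_append reduced_append intro: nzr_sublist)

lemma Str_suffix: "wfq Q \<Longrightarrow> Str Q x (xs @ ys) \<Longrightarrow> Str Q (wend_from Q x xs) ys"
  by (auto simp: Str_def walk_from_append reduced_append intro: nzr_sublist)

lemma Str_revw: "wfq Q \<Longrightarrow> Str Q x ls \<Longrightarrow> Str Q (wend_from Q x ls) (revw ls)"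
  by (auto simp: Str_def dest: walk_revw)

lemma wend_revw: "wfq Q \<Longrightarrow> walk_from Q x ls \<Longrightarrow> wend_from Q (wend_from Q x ls) (revw ls) = x"
  by (auto dest: walk_revw)




abbreviation Tp :: "'a letter list \<Rightarrow> nat \<Rightarrow> 'a letter list" where
  "Tp T n \<equiv> concat (replicate n T)"

lemma Tp_snoc: "Tp X n @ X = X @ Tp X n"
  by (induction n) auto

lemma Tp_Suc2: "Tp X (Suc n) = Tp X n @ X"
  by (simp add: Tp_snoc)

lemma Tp_add: "Tp X (m + n) = Tp X m @ Tp X n"
  by (simp add: replicate_add)

lemma revw_Tp: "revw (Tp T n) = Tp (revw T) n"
  by (induction n) (auto simp: Tp_snoc)

lemma rot_Tp: "A @ Tp (B @ A) n = Tp (A @ B) n @ A"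
  by (induction n) auto

lemma wend_Tp:
  assumes "wend_from Q x T = x" shows "wend_from Q x (Tp T n) = x"
  by (induction n) (auto simp: assms)

lemma walk_Tp:
  assumes "wfq Q" "walk_from Q x T" "wend_from Q x T = x"
  shows "walk_from Q x (Tp T n)"
proof (induction n)
  case 0 then show ?case using assms walk_from_qv by auto
next
  case (Suc n) then show ?case using assms by (auto simp: walk_from_append)
qed

locale bandctx =
  fixes Q :: "('v,'a) bquiver" and \<theta> :: 'v and T :: "'a letter list"
  assumes wfq: "wfq Q" and band: "is_band Q (\<theta>, T)"
begin

lemma T_ne: "T \<noteq> []" using band by (simp add: is_band_def)

lemma walkT: "walk_from Q \<theta> T" using band by (simp add: is_band_def is_string_def is_walk_def)

lemma wendT: "wend_from Q \<theta> T = \<theta>" using band by (simp add: is_band_def wend_def)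

lemma StrTp: "n \<ge> 1 \<Longrightarrow> Str Q \<theta> (Tp T n)"
  using band by (auto simp: is_band_def wpow_def is_string_Str)

lemma walkTp: "walk_from Q \<theta> (Tp T n)"
  by (rule walk_Tp[OF wfq walkT wendT])

lemma wendTp: "wend_from Q \<theta> (Tp T n) = \<theta>"
  by (rule wend_Tp[OF wendT])

lemma Tp_sublist_ok:
  assumes "sublist xs (Tp T n)"
  shows "reduced xs \<and> no_zero_rel Q xs"
proof -
  have "sublist (Tp T n) (Tp T (Suc n))" by (simp add: Tp_Suc2)
  then have "sublist xs (Tp T (Suc n))" using assms by (meson sublist_order.order.trans)
  moreover have "Str Q \<theta> (Tp T (Suc n))" by (rule StrTp) simp
  ultimately show ?thesis by (auto simp: Str_def intro: reduced_sublist nzr_sublist)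
qed

lemma theta_qv: "\<theta> \<in> qv Q"
  by (rule walk_from_qv[OF wfq walkT])

lemma inv_band: "is_band Q (\<theta>, revw T)"
proof -
  have w: "walk_from Q \<theta> (revw T)" using walk_revw[OF wfq walkT] wendT by simp
  have e: "wend_from Q \<theta> (revw T) = \<theta>" using walk_revw[OF wfq walkT] wendT by simp
  have s: "is_string Q (wpow (\<theta>, revw T) n)" if "n \<ge> 1" for n
  proof -
    have "Str Q \<theta> (Tp T n)" using StrTp that by blast
    then have "Str Q \<theta> (revw (Tp T n))"
      using Str_revw[OF wfq] wendTp by fastforce
    then show ?thesis by (simp add: wpow_def is_string_Str revw_Tp)
  qed
  have np: "\<not> (\<exists>u k. k \<ge> 2 \<and> revw T = Tp u k)"
  proof
    assume "\<exists>u k. k \<ge> 2 \<and> revw T = Tp u k"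
    then obtain u k where "k \<ge> 2" "revw T = Tp u k" by blast
    then have "revw (revw T) = revw (Tp u k)" by simp
    then have "T = Tp (revw u) k" by (simp only: revw_revw revw_Tp)
    with \<open>k \<ge> 2\<close> band show False by (auto simp: is_band_def)
  qed
  have s1: "is_string Q (\<theta>, revw T)" using s[of 1] by (simp add: wpow_def)
  show ?thesis unfolding is_band_def
    using s1 e np T_ne s by (simp add: wend_def)
qed

lemma occurrence:
  assumes "v \<in> wverts Q (\<theta>, T)"
  shows "\<exists>A B. T = A @ B \<and> wend_from Q \<theta> A = v"
  using assms walk_split_vertex[of v \<theta> Q T] by (simp add: wverts_def)

lemma vert_in_wverts:
  assumes "T = A @ B" shows "wend_from Q \<theta> A \<in> wverts Q (\<theta>, T)"
proof (cases A rule: rev_cases)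
  case Nil then show ?thesis by (simp add: wverts_def)
next
  case (snoc A' l) then show ?thesis using assms by (simp add: wverts_def)
qed

lemma warrs_ends:
  assumes "fst l \<in> warrs (\<theta>, T)"
  shows "lsrc Q l \<in> wverts Q (\<theta>, T) \<and> ltgt Q l \<in> wverts Q (\<theta>, T)"
proof -
  from assms obtain l' where l': "l' \<in> set T" "fst l' = fst l" by (auto simp: warrs_def)
  then obtain A B where AB: "T = A @ l' # B" by (meson split_list)
  have "walk_from Q \<theta> (A @ l' # B)" using walkT AB by simp
  then have src: "lsrc Q l' = wend_from Q \<theta> A" using wfq by (simp add: walk_from_append)
  have "lsrc Q l' \<in> wverts Q (\<theta>, T)" using src vert_in_wverts[of A "l' # B"] AB by simp
  moreover have "ltgt Q l' \<in> wverts Q (\<theta>, T)" using vert_in_wverts[of "A @ [l']" B] AB by simp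
  ultimately show ?thesis using l'(2)
    by (cases l; cases l') (auto split: if_splits)
qed

lemma path_stays:
  assumes "v \<in> wverts Q (\<theta>, T)" "\<forall>l\<in>set d. fst l \<in> warrs (\<theta>, T)" "walk_from Q v d"
  shows "wend_from Q v d \<in> wverts Q (\<theta>, T)"
  using assms
proof (induction d arbitrary: v)
  case (Cons l d)
  then have "ltgt Q l \<in> wverts Q (\<theta>, T)" using warrs_ends by auto
  with Cons show ?case by auto
qed simp

lemma route_sublist:
  assumes "T = A @ B" "T = A' @ B'"
  shows "sublist (B @ T @ A') (Tp T 3)"
proof -
  have "Tp T 3 = A @ (B @ T @ A') @ B'" using assms by (simp add: numeral_3_eq_3)
  then show ?thesis by (metis sublist_appendI)
qed

lemma rot_compat:
  assumes "T = A @ B"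
  shows "compat (last (B @ A)) (hd (B @ A))"
proof -
  have "Tp T 3 = A @ ((B @ A) @ (B @ A)) @ B" using assms by (simp add: numeral_3_eq_3)
  then have "reduced ((B @ A) @ (B @ A))" using Tp_sublist_ok by (metis sublist_appendI)
  moreover have "B @ A \<noteq> []" using T_ne assms by auto
  ultimately show ?thesis by (simp add: reduced_append del: append_assoc)
qed

lemma rotK_sublist:
  assumes "T = A @ B"
  shows "sublist (Tp (B @ A) K) (Tp T (Suc K))"
proof -
  have "Tp T (Suc K) = Tp (A @ B) K @ (A @ B)" using assms by (simp only: Tp_Suc2)
  also have "\<dots> = (Tp (A @ B) K @ A) @ B" by simp
  also have "\<dots> = A @ Tp (B @ A) K @ B"
  proof -
    have e: "Tp (A @ B) K @ A = A @ Tp (B @ A) K" by (rule rot_Tp[symmetric])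
    show ?thesis by (simp only: e) simp
  qed
  finally have "Tp T (Suc K) = A @ Tp (B @ A) K @ B" .
  then show ?thesis by (metis sublist_appendI)
qed

end



context bandctx begin

lemma doze_assembly:
  assumes "in_I Q r" "path_from Q t r" "path_end Q t r = x'"
    "walk_from Q x' (Z1 @ T @ Z2)" "wend_from Q x' Z1 = \<theta>" "wend_from Q x' (Z1 @ T @ Z2) = t"
    "reduced (dir r @ Z1 @ T @ Z2 @ dir r)"
  shows "\<exists>w. is_DOZE Q w"
proof -
  have wr1: "walk_from Q t (dir r)" using assms(2) by (simp only: walk_dir)
  have wr2: "wend_from Q t (dir r) = x'" using assms(3) by (simp only: wend_dir)
  note wr = wr1 wr2
  have wZ: "walk_from Q x' (Z1 @ T @ Z2 @ dir r)"
    using assms(4,6) wr(1) walk_from_append[OF wfq, of x' "Z1 @ T @ Z2" "dir r"] by simp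
  have walk: "walk_from Q t (dir r @ Z1 @ T @ Z2 @ dir r)"
    using wr wZ walk_from_append[OF wfq, of t "dir r" "Z1 @ T @ Z2 @ dir r"] by simp
  have b: "is_band Q (wend_from Q t (dir r @ Z1), T)" using wr assms(5) band by simp
  have "is_DOZE Q (t, dir r @ Z1 @ T @ Z2 @ dir r)"
    unfolding is_DOZE_def fst_conv snd_conv
  proof (intro conjI)
    show "is_walk Q (t, dir r @ Z1 @ T @ Z2 @ dir r)" using walk by (simp add: is_walk_def)
    show "reduced (dir r @ Z1 @ T @ Z2 @ dir r)" using assms(7) .
    show "\<exists>r1 o1 o2 o3 r2. dir r @ Z1 @ T @ Z2 @ dir r = dir r1 @ o1 @ o2 @ o3 @ dir r2 \<and>
        in_I Q r1 \<and> in_I Q r2 \<and> is_band Q (wend_from Q t (dir r1 @ o1), o2)"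
      using assms(1) b by (intro exI[of _ r] exI[of _ Z1] exI[of _ T] exI[of _ Z2] exI[of _ r]) simp
  qed
  then show ?thesis by blast
qed

end

lemma wend_in_wverts: "wend_from Q x L \<in> wverts Q (x, L)"
  by (cases L rule: rev_cases) (auto simp: wverts_def)

lemma Str_Dobj:
  assumes "wfq Q" "a \<in> qv Q" "Str Q a L"
  shows "wend_from Q a L \<in> D_obj Q (a, []) \<and> fst ` set L \<subseteq> D_arr Q (a, [])"
proof -
  have "(a, L) \<in> Wstr Q (a, [])"
    unfolding Wstr_def
  proof (intro CollectI conjI exI)
    show "is_string Q (a, L)" using assms(3) by (simp add: is_string_Str)
    show "is_walk Q (a, [])" using assms(2) by (simp add: is_walk_def)
    show "is_walk Q (a, L)" using assms(3) by (simp add: is_walk_def Str_def)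
    show "wend Q (a, []) = fst (a, [])" by (simp add: wend_def)
    show "wend Q (a, []) = fst (a, L)" by (simp add: wend_def)
    show "(a, L) = (fst (a, []), snd (a, []) @ snd (a, []) @ snd (a, L))" by simp
  qed
  then have "wverts Q (a, L) \<subseteq> D_obj Q (a, [])" "warrs (a, L) \<subseteq> D_arr Q (a, [])"
    unfolding D_obj_def D_arr_def by blast+
  then show ?thesis using wend_in_wverts[of Q a L]
    by (auto simp: warrs_def)
qed

lemma Dobj_Str:
  assumes "wfq Q" "v \<in> D_obj Q (a, [])"
  shows "\<exists>L. Str Q a L \<and> wend_from Q a L = v"
proof -
  from assms(2) obtain s where s: "s \<in> Wstr Q (a, [])" "v \<in> wverts Q s" by (auto simp: D_obj_def)
  then obtain u w where uw: "is_string Q s" "is_walk Q u" "is_walk Q w" "wend Q u = a"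
    "wend Q (a, []) = fst w" "s = (fst u, snd u @ snd w)"
    by (auto simp: Wstr_def)
  define x where "x = fst u"
  define U where "U = snd u"
  define V where "V = snd w"
  have S: "Str Q x (U @ V)" using uw by (simp add: is_string_Str x_def U_def V_def)
  have Ua: "wend_from Q x U = a" using uw(4) by (simp add: wend_def x_def U_def)
  have "v \<in> insert x (ltgt Q ` set (U @ V))" using s(2) uw(6) by (simp add: wverts_def x_def U_def V_def)
  then obtain l1 l2 where l12: "U @ V = l1 @ l2" "wend_from Q x l1 = v" using walk_split_vertex[of v x Q "U @ V"] by blast
  from l12(1) obtain m where "(l1 = U @ m \<and> V = m @ l2) \<or> (U = l1 @ m \<and> m @ V = l2)"
    by (auto simp: append_eq_append_conv2)
  then show ?thesis
  proof
    assume h: "l1 = U @ m \<and> V = m @ l2"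
    have "Str Q a V" using Str_suffix[OF assms(1) S] Ua by simp
    then have "Str Q a m" using h Str_prefix[OF assms(1)] by blast
    moreover have "wend_from Q a m = v" using h l12(2) Ua by simp
    ultimately show ?thesis by blast
  next
    assume h: "U = l1 @ m \<and> m @ V = l2"
    have "Str Q x U" using Str_prefix[OF assms(1) S] .
    then have sm: "Str Q v m" using h Str_suffix[OF assms(1)] l12(2) by blast
    have em: "wend_from Q v m = a" using h l12(2) Ua by simp
    have "Str Q a (revw m)" using Str_revw[OF assms(1) sm] em by simp
    moreover have "wend_from Q a (revw m) = v"
      using wend_revw[OF assms(1)] sm em by (metis Str_def)
    ultimately show ?thesis by blast
  qed
qed




definition esc :: "('v,'a) bquiver \<Rightarrow> 'v \<Rightarrow> 'a list \<Rightarrow> bool" where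
  "esc Q a P \<longleftrightarrow> (\<exists>s. Str Q a s \<and> wend_from Q a s = qs Q (last P) \<and> last P \<in> fst ` set s)"

lemma lcp_exists:
  "\<exists>F xs' ys'. xs = F @ xs' \<and> ys = F @ ys' \<and> (xs' = [] \<or> ys' = [] \<or> hd xs' \<noteq> hd ys')"
proof (induction xs arbitrary: ys)
  case Nil then show ?case by (intro exI[of _ "[]"] exI[of _ "[]"] exI[of _ ys]) simp
next
  case (Cons x xs)
  show ?case
  proof (cases ys)
    case Nil then show ?thesis by (intro exI[of _ "[]"] exI[of _ "x # xs"] exI[of _ "[]"]) simp
  next
    case (Cons y ys')
    show ?thesis
    proof (cases "x = y")
      case True
      from Cons.IH[of ys'] obtain F xs'' ys'' where
        "xs = F @ xs''" "ys' = F @ ys''" "xs'' = [] \<or> ys'' = [] \<or> hd xs'' \<noteq> hd ys''" by blast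
      then show ?thesis using Cons True by (intro exI[of _ "x # F"] exI[of _ xs''] exI[of _ ys'']) simp
    next
      case False
      then show ?thesis using Cons by (intro exI[of _ "[]"] exI[of _ "x # xs"] exI[of _ ys]) simp
    qed
  qed
qed

lemma linv_eq_iff[simp]: "linv x = linv y \<longleftrightarrow> x = y"
  by (metis linv_linv)

lemma reduced_single[simp]: "reduced [x]"
  by (simp add: reduced_def)

lemma reduced_appI:
  "reduced xs \<Longrightarrow> reduced ys \<Longrightarrow> (xs \<noteq> [] \<Longrightarrow> ys \<noteq> [] \<Longrightarrow> compat (last xs) (hd ys)) \<Longrightarrow> reduced (xs @ ys)"
  by (simp add: reduced_append)

lemma hd_app_ne: "ys \<noteq> [] \<Longrightarrow> hd (xs @ ys) = (if xs = [] then hd ys else hd xs)"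
  by (cases xs) auto

lemma last_app_ne: "xs \<noteq> [] \<Longrightarrow> last (xs @ ys) = (if ys = [] then last xs else last ys)"
  by simp

context bandctx begin

lemma route_facts:
  assumes "T = A @ B"
  shows "hd (B @ T @ A) = hd (B @ A)" "last (B @ T @ A) = last (B @ A)"
    "reduced (B @ T @ A)"
proof -
  show "hd (B @ T @ A) = hd (B @ A)" using assms T_ne by (cases B) auto
  show "last (B @ T @ A) = last (B @ A)" using assms T_ne by (cases A rule: rev_cases) auto
  show "reduced (B @ T @ A)" using Tp_sublist_ok route_sublist[OF assms assms] by blast
qed

lemma walk_B:
  assumes "T = A @ B" "wend_from Q \<theta> A = v"
  shows "walk_from Q v B" "wend_from Q v B = \<theta>" "walk_from Q \<theta> A"
  using walkT wendT assms wfq by (auto simp: walk_from_append)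

lemma doze_at:
  assumes "in_I Q r" "r \<noteq> []" "path_from Q t r" "path_end Q t r = x'"
    "walk_from Q x' X" "wend_from Q x' X = v" "walk_from Q v Y" "wend_from Q v Y = t"
    "reduced X" "reduced Y" "T = A @ B" "wend_from Q \<theta> A = v"
    "compat (if X = [] then (last r, True) else last X) (hd (B @ A))"
    "compat (last (B @ A)) (if Y = [] then (hd r, True) else hd Y)"
    "X \<noteq> [] \<Longrightarrow> compat (last r, True) (hd X)"
    "Y \<noteq> [] \<Longrightarrow> compat (last Y) (hd r, True)"
  shows "\<exists>w. is_DOZE Q w"
proof -
  note wB = walk_B[OF assms(11,12)]
  note rf = route_facts[OF assms(11)]
  have w1: "walk_from Q x' ((X @ B) @ T @ (A @ Y))"
    using assms(5,6,7,11,12) wB walkT wendT wfq by (simp add: walk_from_append)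
  have w2: "wend_from Q x' (X @ B) = \<theta>" using assms(6) wB by simp
  have w3: "wend_from Q x' ((X @ B) @ T @ (A @ Y)) = t" using assms(6,8,11,12) wB wendT by simp
  have rne: "dir r \<noteq> []" using assms(2) by simp
  have hdr: "hd (dir r) = (hd r, True)" "last (dir r) = (last r, True)"
    using assms(2) by (simp_all add: hd_dir last_dir)
  define M where "M = B @ T @ A"
  have Mne: "M \<noteq> []" using T_ne by (simp add: M_def)
  have Mh: "hd M = hd (B @ A)" and Ml: "last M = last (B @ A)" and Mr: "reduced M"
    using rf by (simp_all add: M_def)
  have red1: "reduced (X @ M)"
    by (rule reduced_appI[OF assms(9) Mr]) (use assms(13) Mh in simp)
  have XMne: "X @ M \<noteq> []" using Mne by simp
  have XMl: "last (X @ M) = last (B @ A)" using Mne Ml by simp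
  have red2: "reduced ((X @ M) @ Y)"
    by (rule reduced_appI[OF red1 assms(10)]) (use assms(14) XMl in simp)
  have XMYne: "(X @ M) @ Y \<noteq> []" using Mne by simp
  have hXMY: "hd ((X @ M) @ Y) = (if X = [] then hd (B @ A) else hd X)"
    using Mne Mh by (cases X) auto
  have lXMY: "last ((X @ M) @ Y) = (if Y = [] then last (B @ A) else last Y)"
    using Mne Ml by (cases "Y = []") auto
  have red3: "reduced (dir r @ ((X @ M) @ Y))"
    by (rule reduced_appI[OF reduced_dir red2]) (use assms(13,15) hdr hXMY in \<open>cases "X = []"\<close>; simp)
  have red4: "reduced ((dir r @ ((X @ M) @ Y)) @ dir r)"
    by (rule reduced_appI[OF red3 reduced_dir]) (use assms(14,16) hdr lXMY XMYne in \<open>cases "Y = []"\<close>; simp)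
  then have red4': "reduced (dir r @ (X @ B) @ T @ (A @ Y) @ dir r)" by (simp add: M_def)
  show ?thesis
    by (rule doze_assembly[OF assms(1,3,4) w1 w2 w3 red4'])
qed

lemma walk_R:
  assumes "T = A @ B" "wend_from Q \<theta> A = t"
  shows "walk_from Q t (B @ A)" "wend_from Q t (B @ A) = t"
proof -
  note wB = walk_B[OF assms]
  show "walk_from Q t (B @ A)" using wB assms wfq by (simp add: walk_from_append)
  show "wend_from Q t (B @ A) = t" using wB assms by simp
qed

lemma caseC:
  assumes noD: "\<not> (\<exists>w. is_DOZE Q w)"
    and Sw: "Str Q a (d @ u')" and une: "u' \<noteq> []"
    and occ: "T = A @ B" "wend_from Q \<theta> A = t" and td: "wend_from Q a d = t"
    and hu: "hd u' = hd (B @ A)" "hd u' = (hd p, True)"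
    and xw: "wend_from Q a (d @ u') = x'"
    and lw: "last (d @ u') \<noteq> (last P, True)"
    and rI: "in_I Q (p @ P)" "p \<noteq> []" "P \<noteq> []" "path_from Q t (p @ P)" "path_end Q t (p @ P) = x'"
  shows "esc Q a P"
proof (rule ccontr)
  assume nesc: "\<not> esc Q a P"
  define R where "R = B @ A"
  define n where "n = length u'"
  define RK where "RK = Tp R (Suc (Suc n))"
  define G where "G = B @ Tp T n"
  have Rne: "R \<noteq> []" using T_ne occ by (auto simp: R_def)
  have wR: "walk_from Q t R" "wend_from Q t R = t" using walk_R[OF occ] by (simp_all add: R_def)
  have wRK: "walk_from Q t RK" "wend_from Q t RK = t"
    unfolding RK_def by (rule walk_Tp[OF wfq wR], rule wend_Tp[OF wR(2)])
  have RKdec: "RK = G @ T @ A"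
  proof -
    have "RK = B @ (A @ Tp (B @ A) (Suc n))" by (simp add: RK_def R_def)
    also have "A @ Tp (B @ A) (Suc n) = Tp (A @ B) (Suc n) @ A" by (rule rot_Tp)
    also have "Tp (A @ B) (Suc n) = Tp T n @ T" using occ by (simp only: Tp_Suc2)
    finally show ?thesis by (simp add: G_def)
  qed
  note wB = walk_B[OF occ]
  have wG: "wend_from Q t G = \<theta>" using wB wendTp by (simp add: G_def)
  have subRK: "sublist RK (Tp T (Suc (Suc (Suc n))))"
    unfolding RK_def R_def by (rule rotK_sublist[OF occ(1)])
  have okRK: "sublist xs RK \<Longrightarrow> reduced xs \<and> no_zero_rel Q xs" for xs
    using Tp_sublist_ok subRK by (meson sublist_order.order.trans)
  have hdRK: "hd RK = hd R" using Rne by (simp add: RK_def)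
  obtain F rest S where FS: "u' = F @ rest" "RK = F @ S" "rest = [] \<or> S = [] \<or> hd rest \<noteq> hd S"
    using lcp_exists[of u' RK] by blast
  have RKne: "RK \<noteq> []" using Rne by (simp add: RK_def)
  have Fne: "F \<noteq> []"
  proof
    assume "F = []"
    then have "rest = u'" "S = RK" using FS by auto
    with FS(3) une RKne hu hdRK show False by (simp add: R_def)
  qed
  have lenT: "length T \<ge> 1" using T_ne by (cases T) auto
  have "length (Tp T n) = n * length T" by (induction n) auto
  with lenT have "length (Tp T n) \<ge> n" by simp
  then have lenFG: "length F \<le> length G" using FS(1) by (simp add: G_def n_def)
  obtain S1 where GS1: "G = F @ S1" and SS1: "S = S1 @ T @ A"
  proof -
    have "F @ S = G @ (T @ A)" using FS(2) RKdec by simp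
    then have "take (length F) G = F \<and> S = drop (length F) G @ T @ A"
      using lenFG by (auto simp: append_eq_append_conv_if)
    then show ?thesis using that[of "drop (length F) G"] by (metis append_take_drop_id)
  qed
  have Sne: "S \<noteq> []" using SS1 T_ne by simp
  have Su: "Str Q t u'" using Str_suffix[OF wfq Sw] td by simp
  define y where "y = wend_from Q t F"
  have wF: "walk_from Q t F" using Su FS(1) wfq by (auto simp: Str_def walk_from_append)
  have wrest: "walk_from Q y rest" "wend_from Q y rest = x'"
    using Su FS(1) xw td wfq by (auto simp: Str_def walk_from_append y_def)
  have Srest: "reduced rest" using Su FS(1) by (auto simp: Str_def reduced_append)
  have wS: "walk_from Q y S" "wend_from Q y S = t"
    using wRK FS(2) wfq by (auto simp: walk_from_append y_def)
  have wS1: "wend_from Q y S1 = \<theta>" using wG GS1 by (simp add: y_def)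
  have redS: "reduced S" using okRK FS(2) by auto
  have lastS: "last S = last R"
    using SS1 occ T_ne by (cases A rule: rev_cases) (auto simp: R_def)
  have cS: "compat (last S) (hd p, True)"
    using rot_compat[OF occ(1)] lastS hu by (simp add: R_def)
  have hr: "hd (p @ P) = hd p" "last (p @ P) = last P" using rI(2,3) by simp_all
  have dne: "dir (p @ P) \<noteq> []" using rI(2) by simp
  have hdr: "hd (dir (p @ P)) = (hd p, True)" "last (dir (p @ P)) = (last P, True)"
    using rI(2,3) by (simp_all add: hd_dir last_dir)
  show False
  proof (cases "rest = []")
    case False
    have hS: "hd rest \<noteq> hd S" using FS(3) False Sne by simp
    have lrest: "last rest = last (d @ u')" using False FS(1) by simp
    have red: "reduced (dir (p @ P) @ (revw rest @ S1) @ T @ A @ dir (p @ P))"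
    proof -
      have r1: "reduced (revw rest @ S)"
        by (rule reduced_appI) (use Srest redS False Sne hS in \<open>simp_all add: last_revw compat_iff\<close>)
      have r2: "reduced ((revw rest @ S) @ dir (p @ P))"
        by (rule reduced_appI[OF r1 reduced_dir]) (use cS Sne hdr in simp)
      have r3: "reduced (dir (p @ P) @ ((revw rest @ S) @ dir (p @ P)))"
        by (rule reduced_appI[OF reduced_dir r2])
           (use hdr False lw lrest in \<open>simp add: hd_revw compat_iff\<close>)
      then show ?thesis using SS1 by simp
    qed
    have wZ: "walk_from Q x' ((revw rest @ S1) @ T @ A)"
      using walk_revw[OF wfq wrest(1)] wrest(2) wS SS1 wfq by (simp add: walk_from_append)
    have eZ1: "wend_from Q x' (revw rest @ S1) = \<theta>"
      using walk_revw[OF wfq wrest(1)] wrest(2) wS1 by simp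
    have eZ: "wend_from Q x' ((revw rest @ S1) @ T @ A) = t"
      using walk_revw[OF wfq wrest(1)] wrest(2) wS SS1 by simp
    from doze_assembly[OF rI(1,4,5) wZ eZ1 eZ red] noD show False by blast
  next
    case True
    then have xy: "x' = y" using wrest(2) by simp
    show False
    proof (cases "compat (last P, True) (hd S)")
      case True
      have red: "reduced (dir (p @ P) @ S1 @ T @ A @ dir (p @ P))"
      proof -
        have r2: "reduced (S @ dir (p @ P))"
          by (rule reduced_appI[OF redS reduced_dir]) (use cS Sne hdr in simp)
        have r3: "reduced (dir (p @ P) @ (S @ dir (p @ P)))"
          by (rule reduced_appI[OF reduced_dir r2]) (use hdr True Sne in simp)
        then show ?thesis using SS1 by simp
      qed
      have wZ: "walk_from Q x' (S1 @ T @ A)" using wS SS1 xy by simp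
      have eZ1: "wend_from Q x' S1 = \<theta>" using wS1 xy by simp
      have eZ: "wend_from Q x' (S1 @ T @ A) = t" using wS SS1 xy by simp
      from doze_assembly[OF rI(1,4,5) wZ eZ1 eZ red] noD show False by blast
    next
      case False
      then have hS: "hd S = (last P, False)" by (cases "hd S") (auto simp: compat_def)
      define s where "s = (d @ F) @ [hd S]"
      have uF: "u' = F" using FS(1) \<open>rest = []\<close> by simp
      have Sd: "Str Q a (d @ F)" using Sw uF by simp
      have wdF: "wend_from Q a (d @ F) = y" using td by (simp add: y_def)
      have whS: "walk_from Q y [hd S]"
        using wS(1) Sne wfq by (cases S) (auto dest: lsrc_ltgt_qv)
      have walk_s: "walk_from Q a s"
        using Sd whS wdF wfq by (simp add: s_def Str_def walk_from_append del: append_assoc)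
      have FSr: "reduced (F @ S)" using okRK FS(2) by auto
      then have cFS: "compat (last F) (hd S)" using Fne Sne by (simp add: reduced_append)
      have red_s: "reduced s"
        unfolding s_def by (rule reduced_appI) (use Sd Fne cFS in \<open>simp_all add: Str_def\<close>)
      have subl: "sublist (tl F @ [hd S]) RK"
      proof -
        have "RK = [hd F] @ (tl F @ [hd S]) @ tl S" using FS(2) Fne Sne by simp
        then show ?thesis by (metis sublist_appendI)
      qed
      have nz: "no_zero_rel Q s"
        unfolding s_def
      proof (rule nzr_snoc)
        show "no_zero_rel Q (d @ F)" using Sd by (simp add: Str_def)
        show "no_zero_rel Q (tl F @ [hd S])" using okRK subl by blast
        show "(d @ F) @ [hd S] = d @ hd F # (tl F @ [hd S])" using Fne by simp
        have "hd F = hd u'" using uF by simp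
        then have "hd F = (hd p, True)" using hu by simp
        then show "snd (hd F) \<noteq> snd (hd S)" using hS by simp
      qed
      have "Str Q a s" using walk_s red_s nz by (simp add: Str_def)
      moreover have "wend_from Q a s = qs Q (last P)" using hS by (simp add: s_def)
      moreover have "last P \<in> fst ` set s" using hS by (force simp: s_def)
      ultimately show False using nesc unfolding esc_def by blast
    qed
  qed
qed

lemma hd_rot_in: "T = A @ B \<Longrightarrow> fst (hd (B @ A)) \<in> warrs (\<theta>, T)"
  and last_rot_in: "T = A @ B \<Longrightarrow> fst (last (B @ A)) \<in> warrs (\<theta>, T)"
proof -
  assume "T = A @ B"
  then have ne: "B @ A \<noteq> []" and st: "set (B @ A) = set T" using T_ne by auto
  show "fst (hd (B @ A)) \<in> warrs (\<theta>, T)" using hd_in_set[OF ne] st by (auto simp: warrs_def)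
  show "fst (last (B @ A)) \<in> warrs (\<theta>, T)" using last_in_set[OF ne] st by (auto simp: warrs_def)
qed

end

lemma letter_logic:
  assumes "compat e h" "\<not> (compat li h \<and> compat e lo)" "\<not> (compat li (linv e) \<and> compat (linv h) lo)"
  shows "lo = linv li \<and> (lo = h \<or> lo = linv e)"
  using assms unfolding compat_iff by (metis linv_linv)

context bandctx begin

lemma core:
  assumes noD: "\<not> (\<exists>w. is_DOZE Q w)" and a_on: "a \<in> wverts Q (\<theta>, T)"
    and Sw: "Str Q a (w0 @ dir p)" and td: "wend_from Q a w0 = t"
    and rI: "in_I Q (p @ P)" "p \<noteq> []" "P \<noteq> []" "path_from Q t (p @ P)" "path_end Q t (p @ P) = x'"
    and Sw': "Str Q a w'" and xw: "wend_from Q a w' = x'"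
    and lw: "w' \<noteq> [] \<Longrightarrow> last w' \<noteq> (last P, True)"
  shows "esc Q a P"
proof (rule ccontr)
  assume nesc: "\<not> esc Q a P"
  interpret inv: bandctx Q \<theta> "revw T" by unfold_locales (simp_all add: wfq inv_band)
  obtain d u u' where lcp: "w0 = d @ u" "w' = d @ u'" "u = [] \<or> u' = [] \<or> hd u \<noteq> hd u'"
    using lcp_exists[of w0 w'] by blast
  have Sw0: "Str Q a w0" using Str_prefix[OF wfq Sw] .
  have cw0: "w0 \<noteq> [] \<Longrightarrow> compat (last w0) (hd p, True)"
    using Sw rI(2) by (auto simp: Str_def reduced_append hd_dir)
  define isTh where "isTh = (\<lambda>l::'a letter. fst l \<in> warrs (\<theta>, T))"
  define d1 where "d1 = takeWhile isTh d"
  define d2 where "d2 = dropWhile isTh d"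
  have dd: "d = d1 @ d2" by (simp add: d1_def d2_def)
  have Sd: "Str Q a d" using Str_prefix[OF wfq] Sw0 lcp(1) by blast
  have wd1: "walk_from Q a d1" using Sd dd wfq by (auto simp: Str_def walk_from_append)
  define v where "v = wend_from Q a d1"
  have von: "v \<in> wverts Q (\<theta>, T)"
    unfolding v_def by (rule path_stays[OF a_on _ wd1]) (auto simp: d1_def isTh_def dest: set_takeWhileD)
  obtain A B where occ: "T = A @ B" "wend_from Q \<theta> A = v" using occurrence[OF von] by blast
  note wB = walk_B[OF occ]
  have hr: "hd (p @ P) = hd p" "last (p @ P) = last P" using rI(2,3) by simp_all
  have w0s: "walk_from Q v (d2 @ u)" "wend_from Q v (d2 @ u) = t" "reduced (d2 @ u)"
    using Sw0 lcp(1) dd td wfq by (auto simp: Str_def walk_from_append reduced_append v_def)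
  have w's: "walk_from Q v (d2 @ u')" "wend_from Q v (d2 @ u') = x'" "reduced (d2 @ u')"
    using Sw' lcp(2) dd xw wfq by (auto simp: Str_def walk_from_append reduced_append v_def)
  show False
  proof (cases "d2 = []")
    case False
    define e where "e = hd d2"
    have ne: "\<not> isTh e" unfolding e_def d2_def using False[unfolded d2_def]
      by (metis hd_dropWhile)
    have X: "walk_from Q x' (revw (d2 @ u'))" "wend_from Q x' (revw (d2 @ u')) = v"
      using walk_revw[OF wfq w's(1)] w's(2) by auto
    have "\<exists>w. is_DOZE Q w"
    proof (rule doze_at[OF rI(1) _ rI(4,5) X w0s(1,2) _ w0s(3) occ])
      show "p @ P \<noteq> []" using rI(2) by simp
      show "reduced (revw (d2 @ u'))" by (subst reduced_revw) (rule w's(3))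
      have lX: "last (revw (d2 @ u')) = linv e" using False by (simp add: last_revw e_def)
      show "compat (if revw (d2 @ u') = [] then (last (p @ P), True) else last (revw (d2 @ u'))) (hd (B @ A))"
        using False lX hd_rot_in[OF occ(1)] ne by (auto simp: compat_iff isTh_def)
      have hY: "hd (d2 @ u) = e" using False by (simp add: e_def)
      show "compat (last (B @ A)) (if d2 @ u = [] then (hd (p @ P), True) else hd (d2 @ u))"
        using False hY last_rot_in[OF occ(1)] ne by (auto simp: compat_iff isTh_def)
      show "compat (last (p @ P), True) (hd (revw (d2 @ u')))" if "revw (d2 @ u') \<noteq> []"
      proof -
        have "last (d2 @ u') = last w'" using False lcp(2) dd by simp
        moreover have "w' \<noteq> []" using False lcp(2) dd by simp
        moreover have h1: "hd (revw (d2 @ u')) = linv (last (d2 @ u'))" by (rule hd_revw) (use False in simp)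
        ultimately show ?thesis unfolding h1 compat_iff using lw hr by simp
      qed
      show "compat (last (d2 @ u)) (hd (p @ P), True)" if "d2 @ u \<noteq> []"
      proof -
        have "last (d2 @ u) = last w0" using False lcp(1) dd by simp
        moreover have "w0 \<noteq> []" using False lcp(1) dd by simp
        ultimately show ?thesis using cw0 hr by simp
      qed
    qed
    with noD show False by blast
  next
    case True
    have dv: "wend_from Q a d = v" using True dd by (simp add: v_def)
    have X: "walk_from Q x' (revw u')" "wend_from Q x' (revw u') = v"
      using walk_revw[OF wfq w's(1)] w's(2) True by auto
    have Xr: "reduced (revw u')" "reduced u" using w's(3) w0s(3) True by auto
    have Y: "walk_from Q v u" "wend_from Q v u = t" using w0s True by auto
    define li where "li = (if u' = [] then (last P, True) else linv (hd u'))"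
    define lo where "lo = (if u = [] then (hd p, True) else hd u)"
    have c15: "compat (last (p @ P), True) (hd (revw u'))" if "revw u' \<noteq> []"
    proof -
      have "last u' = last w'" "w' \<noteq> []" using that lcp(2) by auto
      then show ?thesis using lw hr that by (simp add: hd_revw compat_iff)
    qed
    have c16: "compat (last u) (hd (p @ P), True)" if "u \<noteq> []"
    proof -
      have "last u = last w0" "w0 \<noteq> []" using that lcp(1) by auto
      then show ?thesis using cw0 hr by simp
    qed
    have lXe: "(if revw u' = [] then (last (p @ P), True) else last (revw u')) = li"
      using hr by (simp add: li_def last_revw)
    have lYe: "(if u = [] then (hd (p @ P), True) else hd u) = lo"
      using hr by (simp add: lo_def)
    have B1: "\<not> (compat li (hd (B @ A)) \<and> compat (last (B @ A)) lo)"
    proof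
      assume h: "compat li (hd (B @ A)) \<and> compat (last (B @ A)) lo"
      have "\<exists>w. is_DOZE Q w"
        by (rule doze_at[OF rI(1) _ rI(4,5) X Y Xr occ])
           (use rI(2) h lXe lYe c15 c16 in simp_all)
      with noD show False by blast
    qed
    have occ': "revw T = revw B @ revw A" "wend_from Q \<theta> (revw B) = v"
      using occ wend_revw[OF wfq wB(1)] wB(2) by auto
    have rotinv: "revw A @ revw B = revw (B @ A)" by simp
    have BAne: "B @ A \<noteq> []" using T_ne occ by auto
    have hAB: "hd (revw A @ revw B) = linv (last (B @ A))"
      using hd_revw[OF BAne] by (simp only: revw_append)
    have lAB: "last (revw A @ revw B) = linv (hd (B @ A))"
      using last_revw[OF BAne] by (simp only: revw_append)
    have B2: "\<not> (compat li (linv (last (B @ A))) \<and> compat (linv (hd (B @ A))) lo)"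
    proof
      assume h: "compat li (linv (last (B @ A))) \<and> compat (linv (hd (B @ A))) lo"
      have "\<exists>w. is_DOZE Q w"
        by (rule inv.doze_at[OF rI(1) _ rI(4,5) X Y Xr occ'])
           (use rI(2) h lXe lYe c15 c16 hAB lAB in simp_all)
      with noD show False by blast
    qed
    have LL: "lo = linv li \<and> (lo = hd (B @ A) \<or> lo = linv (last (B @ A)))"
      by (rule letter_logic[OF rot_compat[OF occ(1)] B1 B2])
    show False
    proof (cases "u = []")
      case False
      show False
      proof (cases "u' = []")
        case True
        then have hu: "hd u = (last P, False)" using LL False by (simp add: li_def lo_def linv_def)
        define s where "s = d @ [hd u]"
        have "Str Q a s"
          using Sw0 lcp(1) False Str_prefix[OF wfq, of a "d @ [hd u]" "tl u"] by (simp add: s_def)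
        moreover have "wend_from Q a s = qs Q (last P)" using hu by (simp add: s_def)
        moreover have "last P \<in> fst ` set s" using hu by (force simp: s_def)
        ultimately show False using nesc unfolding esc_def by blast
      next
        case False2: False
        then have "hd u = hd u'" using LL False by (simp add: li_def lo_def)
        with lcp(3) False False2 show False by simp
      qed
    next
      case True
      have tv: "t = v" using True Y by simp
      show False
      proof (cases "u' = []")
        case True2: True
        then show False using LL True by (simp add: li_def lo_def linv_def)
      next
        case False
        have hu: "hd u' = (hd p, True)" using LL True False by (simp add: li_def lo_def)
        have Sw'': "Str Q a (d @ u')" using Sw' lcp(2) by simp
        have xw': "wend_from Q a (d @ u') = x'" using xw lcp(2) by simp
        have lw': "last (d @ u') \<noteq> (last P, True)" using lw lcp(2) False by simp
        have rI': "path_from Q v (p @ P)" "path_end Q v (p @ P) = x'" using rI(4,5) tv by auto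
        have loe: "lo = (hd p, True)" using True by (simp add: lo_def)
        from LL have "lo = hd (B @ A) \<or> lo = linv (last (B @ A))" by blast
        then have "(hd p, True) = hd (B @ A) \<or> (hd p, True) = linv (last (B @ A))"
          by (simp only: loe)
        then show False
        proof
          assume h: "(hd p, True) = hd (B @ A)"
          have "esc Q a P"
            by (rule caseC[OF noD Sw'' False occ dv _ hu xw' lw' rI(1,2,3) rI'])
               (use h hu in simp)
          with nesc show False by blast
        next
          assume h: "(hd p, True) = linv (last (B @ A))"
          have "esc Q a P"
            by (rule inv.caseC[OF noD Sw'' False occ' dv _ hu xw' lw' rI(1,2,3) rI'])
               (use h hu hAB in simp)
          with nesc show False by blast
        qed
      qed
    qed
  qed
qed

end




lemma in_I_mono: "in_I Q xs \<Longrightarrow> sublist xs ys \<Longrightarrow> in_I Q ys"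
  unfolding in_I_def by (meson sublist_order.order.trans)

lemma all_snd_dir: "(\<forall>l\<in>set xs. snd l) \<Longrightarrow> xs = dir (map fst xs)"
  by (induction xs) (auto simp: dir_def)

lemma extract_rel:
  assumes rel2: "\<forall>r\<in>qrel Q. length r \<ge> 2" and nzw: "no_zero_rel Q w" and nP: "\<not> in_I Q P"
    and bad: "\<not> no_zero_rel Q (w @ dir P)"
  shows "\<exists>w0 p. w = w0 @ dir p \<and> p \<noteq> [] \<and> in_I Q (p @ P)"
proof -
  have nzP: "no_zero_rel Q (dir P)" using nzr_dir_iff[OF rel2] nP by blast
  from bad obtain u where su: "sublist u (w @ dir P)" and
    C: "((\<forall>l\<in>set u. snd l) \<and> in_I Q (map fst u)) \<or> ((\<forall>l\<in>set u. \<not> snd l) \<and> in_I Q (rev (map fst u)))"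
    unfolding no_zero_rel_def by blast
  have nsw: "\<not> sublist u w" using nzw C unfolding no_zero_rel_def by blast
  have nsP: "\<not> sublist u (dir P)" using nzP C unfolding no_zero_rel_def by blast
  from su nsw nsP obtain u1 u2 where u12: "u = u1 @ u2" "suffix u1 w" "prefix u2 (dir P)"
    by (auto simp: sublist_append)
  have u1ne: "u1 \<noteq> []" using u12 nsP by auto
  have u2ne: "u2 \<noteq> []" using u12 nsw by auto
  have Pne: "P \<noteq> []" using u12(3) u2ne by (cases P) (auto simp: dir_def)
  have "hd u2 = hd (dir P)" using u12(3) u2ne by (auto simp: prefix_def)
  then have "snd (hd u2) = True" using Pne by (simp add: hd_dir)
  moreover have "hd u2 \<in> set u" using u12(1) u2ne by simp
  ultimately have C1: "(\<forall>l\<in>set u. snd l) \<and> in_I Q (map fst u)" using C by blast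
  define p where "p = map fst u1"
  have u1d: "u1 = dir p" unfolding p_def by (rule all_snd_dir) (use C1 u12(1) in simp)
  obtain w0 where w0: "w = w0 @ u1" using u12(2) by (auto simp: suffix_def)
  have pref: "prefix (map fst u2) P"
  proof -
    have "prefix (map fst u2) (map fst (dir P))" using u12(3) by (rule map_mono_prefix)
    then show ?thesis by simp
  qed
  have "sublist (p @ map fst u2) (p @ P)" using pref by (auto simp: prefix_def)
  moreover have "in_I Q (p @ map fst u2)" using C1 u12(1) by (simp add: p_def)
  ultimately have "in_I Q (p @ P)" by (rule in_I_mono[rotated])
  moreover have "p \<noteq> []" using u1ne by (simp add: p_def)
  ultimately show ?thesis using w0 u1d by blast
qed

lemma walk_letters: "walk_from Q x ls \<Longrightarrow> l \<in> set ls \<Longrightarrow> fst l \<in> qa Q"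
  by (induction ls arbitrary: x) auto

lemma path_append: "wfq Q \<Longrightarrow> path_from Q x (p @ q) \<longleftrightarrow> path_from Q x p \<and> path_from Q (path_end Q x p) q"
  by (simp add: walk_dir wend_dir walk_from_append)

lemma path_end_append: "path_end Q x (p @ q) = path_end Q (path_end Q x p) q"
  by (simp add: wend_dir)

context bandctx begin

lemma a_qv: "a \<in> wverts Q (\<theta>, T) \<Longrightarrow> a \<in> qv Q"
  using theta_qv walkT wfq by (auto simp: wverts_def dest: walk_letters lsrc_ltgt_qv)

lemma main_path:
  assumes noD: "\<not> (\<exists>w. is_DOZE Q w)" and a_on: "a \<in> wverts Q (\<theta>, T)"
    and rel2: "\<forall>r\<in>qrel Q. length r \<ge> 2"
  shows "path_from Q x P \<Longrightarrow> \<not> in_I Q P \<Longrightarrow> x \<in> D_obj Q (a, []) \<Longrightarrow>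
         path_end Q x P \<in> D_obj Q (a, []) \<Longrightarrow> set P \<subseteq> D_arr Q (a, [])"
proof (induction "length P" arbitrary: x P rule: less_induct)
  case less
  note IH = less.hyps
  have aq: "a \<in> qv Q" using a_qv a_on by blast
  show ?case
  proof (cases "P = []")
    case True then show ?thesis by simp
  next
    case Pne: False
    define x' where "x' = path_end Q x P"
    obtain w where w: "Str Q a w" "wend_from Q a w = x" using Dobj_Str[OF wfq less.prems(3)] by blast
    obtain w' where w': "Str Q a w'" "wend_from Q a w' = x'"
      using Dobj_Str[OF wfq less.prems(4)] by (auto simp: x'_def)
    have escP': "set P \<subseteq> D_arr Q (a, [])"
      if D1: "last P \<in> D_arr Q (a, [])" "qs Q (last P) \<in> D_obj Q (a, [])"
    proof -
      have Pd: "P = butlast P @ [last P]" using Pne by simp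
      have pb: "path_from Q x (butlast P)" "path_end Q x (butlast P) = qs Q (last P)"
      proof -
        have "path_from Q x (butlast P @ [last P])" using less.prems(1) Pd by simp
        then show "path_from Q x (butlast P)" "path_end Q x (butlast P) = qs Q (last P)"
          using wfq by (simp_all add: path_append)
      qed
      have nb: "\<not> in_I Q (butlast P)"
        using less.prems(2) in_I_mono[of Q "butlast P" P] by (metis Pd sublist_append_rightI)
      have "set (butlast P) \<subseteq> D_arr Q (a, [])"
        using IH[of "butlast P" x] Pne pb nb less.prems(3) D1(2) by simp
      then show ?thesis using D1(1) Pd by (metis Un_insert_right insert_subset set_append
          empty_set list.simps(15) sup_bot.right_neutral)
    qed
    have escP: "set P \<subseteq> D_arr Q (a, [])" if e: "esc Q a P"
    proof -
      from e obtain s where s: "Str Q a s" "wend_from Q a s = qs Q (last P)" "last P \<in> fst ` set s"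
        by (auto simp: esc_def)
      show ?thesis by (rule escP') (use Str_Dobj[OF wfq aq s(1)] s(2,3) in auto)
    qed
    show ?thesis
    proof (cases "w \<noteq> [] \<and> last w = (hd P, False)")
      case True
      have Wd: "w = butlast w @ [last w]" using True append_butlast_last_id[of w] by argo
      have wb: "walk_from Q a (butlast w @ [last w])" using w(1) Wd by (simp add: Str_def)
      then have eb: "wend_from Q a (butlast w) = qt Q (hd P)" using True wfq by (simp add: walk_from_snoc)
      have Sb: "Str Q a (butlast w)" using Str_prefix[OF wfq, of a "butlast w" "[last w]"] w(1) Wd by simp
      have D1: "qt Q (hd P) \<in> D_obj Q (a, [])" using Str_Dobj[OF wfq aq Sb] eb by simp
      have D2: "hd P \<in> D_arr Q (a, [])"
      proof -
        have "last w \<in> set w" using True last_in_set by blast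
        then have "hd P \<in> fst ` set w" using True by force
        then show ?thesis using Str_Dobj[OF wfq aq w(1)] by blast
      qed
      have Pc: "P = hd P # tl P" using Pne by simp
      have pt: "path_from Q (qt Q (hd P)) (tl P)" "path_end Q (qt Q (hd P)) (tl P) = path_end Q x P"
        using less.prems(1) Pc by (metis path_from.simps(2), metis path_end.simps(2))
      have nt: "\<not> in_I Q (tl P)"
        using less.prems(2) in_I_mono[of Q "tl P" P] by (metis sublist_tl)
      have "set (tl P) \<subseteq> D_arr Q (a, [])"
        using IH[of "tl P" "qt Q (hd P)"] Pne pt nt D1 less.prems(4) by simp
      then show ?thesis using D2 Pc by (metis insert_subset list.simps(15))
    next
      case nfront: False
      show ?thesis
      proof (cases "w' \<noteq> [] \<and> last w' = (last P, True)")
        case True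
        have Wd: "w' = butlast w' @ [last w']" using True append_butlast_last_id[of w'] by argo
        have wb: "walk_from Q a (butlast w' @ [last w'])" using w'(1) Wd by (simp add: Str_def)
        then have e1: "wend_from Q a (butlast w') = qs Q (last P)" using True wfq by (simp add: walk_from_snoc)
        have S1: "Str Q a (butlast w')" using Str_prefix[OF wfq, of a "butlast w'" "[last w']"] w'(1) Wd by simp
        have "last w' \<in> set w'" using True last_in_set by blast
        then have "last P \<in> fst ` set w'" using True by force
        then have "last P \<in> D_arr Q (a, [])" using Str_Dobj[OF wfq aq w'(1)] by blast
        moreover have "qs Q (last P) \<in> D_obj Q (a, [])" using Str_Dobj[OF wfq aq S1] e1 by simp
        ultimately show ?thesis by (rule escP')
      next
        case nback: False
        have wP: "walk_from Q a (w @ dir P)"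
          using w less.prems(1) wfq by (simp add: Str_def walk_from_append walk_dir)
        have rP: "reduced (w @ dir P)"
        proof (rule reduced_appI)
          show "reduced w" using w(1) by (simp add: Str_def)
          show "reduced (dir P)" by simp
          show "compat (last w) (hd (dir P))" if "w \<noteq> []" "dir P \<noteq> []"
            using that nfront Pne by (cases "last w") (auto simp: hd_dir compat_def)
        qed
        show ?thesis
        proof (cases "no_zero_rel Q (w @ dir P)")
          case True
          then have "Str Q a (w @ dir P)" using wP rP by (simp add: Str_def)
          then have "fst ` set (w @ dir P) \<subseteq> D_arr Q (a, [])" using Str_Dobj[OF wfq aq] by blast
          moreover have "set P \<subseteq> fst ` set (w @ dir P)" by (force simp: dir_def)
          ultimately show ?thesis by blast
        next
          case False
          obtain w0 p where wp: "w = w0 @ dir p" "p \<noteq> []" "in_I Q (p @ P)"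
            using extract_rel[OF rel2 _ less.prems(2) False] w(1) by (auto simp: Str_def)
          define t where "t = wend_from Q a w0"
          have pp: "path_from Q t p" "path_end Q t p = x"
            using w wp(1) wfq by (auto simp: Str_def walk_from_append t_def walk_dir wend_dir)
          have pr: "path_from Q t (p @ P)" using pp less.prems(1) wfq by (simp add: path_append)
          have pe: "path_end Q t (p @ P) = x'" using pp by (simp add: path_end_append x'_def)
          have "esc Q a P"
            by (rule core[OF noD a_on _ t_def[symmetric] wp(3,2) Pne pr pe w'])
               (use w(1) wp(1) nback in auto)
          then show ?thesis by (rule escP)
        qed
      qed
    qed
  qed
qed

end


theorem lemma2p3:
  fixes Q :: "('v, 'a) bquiver" and \<Theta> :: "('v, 'a) walk" and a :: 'v
  assumes "string_algebra Q"
    and "\<not> (\<exists>w. is_DOZE Q w)"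
    and "\<exists>B. is_band Q B"
    and "\<forall>B. is_band Q B \<longrightarrow> \<not> ((\<exists>\<alpha>. exiting Q B \<alpha>) \<and> (\<exists>\<alpha>. entering Q B \<alpha>))"
    and "\<not> (\<exists>B. is_band Q B \<and> qa Q = warrs B \<and> qv Q = wverts Q B)"
    and "is_band Q \<Theta>"
    and "\<not> (\<exists>\<alpha>. entering Q \<Theta> \<alpha>)"
    and "a \<in> wverts Q \<Theta>"
    and "\<forall>\<alpha>\<in>qa Q. qs Q \<alpha> = a \<longrightarrow> \<alpha> \<in> warrs \<Theta>"
  shows "(\<forall>\<alpha>\<in>qa Q. qs Q \<alpha> \<in> D_obj Q (a, []) \<and> qt Q \<alpha> \<in> D_obj Q (a, [])
            \<longrightarrow> \<alpha> \<in> D_arr Q (a, [])) \<and>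
         (\<forall>x p. path_from Q x p \<and> \<not> in_I Q p \<and> x \<in> D_obj Q (a, []) \<and>
            path_end Q x p \<in> D_obj Q (a, []) \<longrightarrow> set p \<subseteq> D_arr Q (a, []))"
proof -
  have wf: "wfq Q" using assms(1) by (auto simp: string_algebra_def wfq_def)
  have rel2: "\<forall>r\<in>qrel Q. length r \<ge> 2" using assms(1) by (auto simp: string_algebra_def)
  have bd: "is_band Q (fst \<Theta>, snd \<Theta>)" using assms(6) by simp
  interpret bandctx Q "fst \<Theta>" "snd \<Theta>" by unfold_locales (use wf bd in simp_all)
  have a_on: "a \<in> wverts Q (fst \<Theta>, snd \<Theta>)" using assms(8) by simp
  note mp = main_path[OF assms(2) a_on rel2]
  show ?thesis
  proof (intro conjI ballI allI impI)
    fix \<alpha> assume al: "\<alpha> \<in> qa Q" and h: "qs Q \<alpha> \<in> D_obj Q (a, []) \<and> qt Q \<alpha> \<in> D_obj Q (a, [])"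
    have pth: "path_from Q (qs Q \<alpha>) [\<alpha>]" using wf al by (simp add: wfq_def)
    have ni: "\<not> in_I Q [\<alpha>]"
    proof
      assume "in_I Q [\<alpha>]"
      then obtain r where "r \<in> qrel Q" "sublist r [\<alpha>]" by (auto simp: in_I_def)
      then show False using rel2 sublist_length_le[of r "[\<alpha>]"] by force
    qed
    have "set [\<alpha>] \<subseteq> D_arr Q (a, [])" using mp[OF pth ni] h by simp
    then show "\<alpha> \<in> D_arr Q (a, [])" by simp
  next
    fix x p assume "path_from Q x p \<and> \<not> in_I Q p \<and> x \<in> D_obj Q (a, []) \<and> path_end Q x p \<in> D_obj Q (a, [])"
    then show "set p \<subseteq> D_arr Q (a, [])" using mp by blast
  qed
qed

end
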